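(* Let $T_1,T_2>0$, $T\coloneqq T_1T_2$, and $\mathrm{SiLU}_T(x)\coloneqq x/(1+e^{-x/T})$. Let $H$ be Hermitian and $\rho$ a density operator on a finite-dimensional Hilbert space $\mathcal{H}$. Prepare two control qumodes in $|0\rangle\langle0|\otimes|\ell_{T_1}\rangle\langle\ell_{T_1}|$, where $|0\rangle=\int dp\,\sqrt{e^{-p^2}/\sqrt{\pi}}\,|p\rangle$ is the vacuum and $|\ell_{T_1}\rangle=\int dp\sqrt{\ell_{T_1}(p)}|p\rangle$, apply $W\coloneqq e^{i\hat{x}_2\otimes H/T_2}e^{i\hat{x}_1\otimes H}$, and let $P(p_1,p_2)$ be the joint density of momentum-measurement outcomes on the two control modes (defined as $\operatorname{Tr}[(|p_1\rangle\langle p_1|\otimes|p_2\rangle\langle p_2|\otimes I)W(|0\rangle\langle0|\otimes|\ell_{T_1}\rangle\langle\ell_{T_1}|\otimes\rho)W^\dagger]$). Then $$\int\!\!\int p_1\,\mathbf{1}_{p_2\ge0}\,P(p_1,p_2)\,dp_1\,dp_2=\operatorname{Tr}[\mathrm{SiLU}_T(H)\rho].$$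
   Context: $\ell_{T_1}(p)\coloneqq\frac{e^{p/T_1}}{T_1(e^{p/T_1}+1)^2}$ is the logistic density. Each control qumode has Hilbert space $L^2(\mathbb{R})$ with generalized position/momentum eigenbases, $\langle x|p\rangle=e^{ipx}/\sqrt{2\pi}$; $\hat x_m$ is the position quadrature of mode $m$ and $e^{i\hat{x}_m\otimes B}=\sum_i\int dx\,e^{ixb_i}|x\rangle\langle x|_m\otimes|i\rangle\langle i|$ for Hermitian $B=\sum_ib_i|i\rangle\langle i|$. *)

theory Defs
  imports "HOL-Analysis.Analysis"
begin

(* The finite-dimensional Hilbert space is modelled as complex^'n (coordinates in a
   fixed orthonormal basis); operators on it are matrices complex^'n^'n. *)

definition cadj :: "complex^'n^'m \<Rightarrow> complex^'m^'n" where
  "cadj A = (\<chi> i j. cnj (A $ j $ i))"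

definition hermitian_mat :: "complex^'n^'n \<Rightarrow> bool" where
  "hermitian_mat A \<longleftrightarrow> cadj A = A"

definition unitary_mat :: "complex^'n^'n \<Rightarrow> bool" where
  "unitary_mat U \<longleftrightarrow> cadj U ** U = mat 1 \<and> U ** cadj U = mat 1"

definition density_op :: "complex^'n^'n \<Rightarrow> bool" where
  "density_op \<rho> \<longleftrightarrow> hermitian_mat \<rho>
     \<and> (\<forall>v::complex^'n. (\<Sum>i\<in>UNIV. cnj (v $ i) * (\<rho> *v v) $ i) \<in> \<real>
                          \<and> 0 \<le> Re (\<Sum>i\<in>UNIV. cnj (v $ i) * (\<rho> *v v) $ i))
     \<and> trace \<rho> = 1"

definition diag_m :: "('n \<Rightarrow> complex) \<Rightarrow> complex^'n^'n" where
  "diag_m d = (\<chi> i j. if i = j then d i else 0)"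

(* For Hermitian B = U diag(b) U^dagger (eigenvalues b_i, eigenvectors = columns of U):
   the spectral projector onto the i-th eigenvector, and the functional calculus f(B). *)
definition eproj :: "complex^'n^'n \<Rightarrow> 'n \<Rightarrow> complex^'n^'n" where
  "eproj U i = U ** diag_m (\<lambda>j. if j = i then 1 else 0) ** cadj U"

definition spec_fun :: "(real \<Rightarrow> real) \<Rightarrow> complex^'n^'n \<Rightarrow> ('n \<Rightarrow> real) \<Rightarrow> complex^'n^'n" where
  "spec_fun f U b = U ** diag_m (\<lambda>i. complex_of_real (f (b i))) ** cadj U"

definition silu :: "real \<Rightarrow> real \<Rightarrow> real" where
  "silu T x = x / (1 + exp (- x / T))"

definition logistic :: "real \<Rightarrow> real \<Rightarrow> real" where
  "logistic T1 p = exp (p / T1) / (T1 * (exp (p / T1) + 1)\<^sup>2)"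

definition vac_wf :: "real \<Rightarrow> real" where
  "vac_wf p = sqrt (exp (- (p\<^sup>2)) / sqrt pi)"

definition logistic_wf :: "real \<Rightarrow> real \<Rightarrow> real" where
  "logistic_wf T1 p = sqrt (logistic T1 p)"

(* States/operators on L^2(R) (x) L^2(R) (x) C^n are written in the (generalized)
   momentum eigenbasis |p1>|p2> of the two control qumodes.  A (column of an) object is a
   function (p1,p2) => matrix; an operator on the full space is a kernel
   K (p1,p2) (q1,q2) = <p1,p2| K |q1,q2>, a complex^'n^'n matrix on the system.

   With <x|p> = e^{ipx}/sqrt(2 pi) one has e^{i x b}|p> = |p+b>, hence
   e^{i x_m (x) B} = sum_i int dx e^{i x b_i}|x><x|_m (x) |i><i| acts in the momentum
   representation as  F(p) |-> sum_i P_i F(p - b_i e_m),  P_i the eigenprojectors of B. *)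

definition ctrl_exp1 :: "complex^'n^'n \<Rightarrow> ('n \<Rightarrow> real)
     \<Rightarrow> (real \<times> real \<Rightarrow> complex^'k^'n) \<Rightarrow> (real \<times> real \<Rightarrow> complex^'k^'n)" where
  "ctrl_exp1 U b F = (\<lambda>(p1, p2). \<Sum>i\<in>UNIV. eproj U i ** F (p1 - b i, p2))"

definition ctrl_exp2 :: "complex^'n^'n \<Rightarrow> ('n \<Rightarrow> real)
     \<Rightarrow> (real \<times> real \<Rightarrow> complex^'k^'n) \<Rightarrow> (real \<times> real \<Rightarrow> complex^'k^'n)" where
  "ctrl_exp2 U b F = (\<lambda>(p1, p2). \<Sum>i\<in>UNIV. eproj U i ** F (p1, p2 - b i))"

definition W_op :: "real \<Rightarrow> complex^'n^'n \<Rightarrow> ('n \<Rightarrow> real)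
     \<Rightarrow> (real \<times> real \<Rightarrow> complex^'n^'n) \<Rightarrow> (real \<times> real \<Rightarrow> complex^'n^'n)" where
  "W_op T2 U b = ctrl_exp2 U (\<lambda>i. b i / T2) \<circ> ctrl_exp1 U b"

type_synonym ('n) kernel = "real \<times> real \<Rightarrow> real \<times> real \<Rightarrow> complex^'n^'n"

definition op_left :: "((real \<times> real \<Rightarrow> complex^'n^'n) \<Rightarrow> (real \<times> real \<Rightarrow> complex^'n^'n))
     \<Rightarrow> ('n::finite) kernel \<Rightarrow> ('n::finite) kernel" where
  "op_left A K = (\<lambda>p q. A (\<lambda>r. K r q) p)"

definition ker_adj :: "('n::finite) kernel \<Rightarrow> ('n::finite) kernel" where
  "ker_adj K = (\<lambda>p q. cadj (K q p))"

(* A K A^dagger = ( A (A K)^dagger )^dagger *)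
definition sandwich :: "((real \<times> real \<Rightarrow> complex^'n^'n) \<Rightarrow> (real \<times> real \<Rightarrow> complex^'n^'n))
     \<Rightarrow> ('n::finite) kernel \<Rightarrow> ('n::finite) kernel" where
  "sandwich A K = ker_adj (op_left A (ker_adj (op_left A K)))"

definition init_state :: "real \<Rightarrow> complex^'n^'n \<Rightarrow> ('n::finite) kernel" where
  "init_state T1 \<rho> = (\<lambda>(p1, p2) (q1, q2).
      (vac_wf p1 * logistic_wf T1 p2 * vac_wf q1 * logistic_wf T1 q2) *\<^sub>R \<rho>)"

definition joint_density :: "real \<Rightarrow> real \<Rightarrow> complex^'n^'n \<Rightarrow> ('n \<Rightarrow> real)
     \<Rightarrow> complex^'n^'n \<Rightarrow> real \<times> real \<Rightarrow> complex" where
  "joint_density T1 T2 U b \<rho> p = trace (sandwich (W_op T2 U b) (init_state T1 \<rho>) p p)"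

end

theory Submission
  imports Defs "HOL-Probability.Probability"
begin


lemma mm_sum_right: "finite S \<Longrightarrow> (A::'a::semiring_1^'n^'m) ** sum f S = (\<Sum>x\<in>S. A ** f x)"
  by (induction S rule: finite_induct) (auto simp: matrix_add_ldistrib)

lemma matrix_add_rdistrib': "((B + C) ** (A::'a::semiring_1^'p^'n)) = (B ** A) + (C ** A)"
  by (vector matrix_matrix_mult_def sum.distrib[symmetric] field_simps)

lemma mm_sum_left: "finite S \<Longrightarrow> sum f S ** (A::'a::semiring_1^'p^'n) = (\<Sum>x\<in>S. f x ** A)"
  by (induction S rule: finite_induct) (auto simp: matrix_add_rdistrib')

lemma sum_mat_comp: "finite S \<Longrightarrow> (sum f S) $ i $ j = (\<Sum>x\<in>S. f x $ i $ j)"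
  by (induction S rule: finite_induct) auto

lemma trace_sum: "finite S \<Longrightarrow> trace (sum (f::_\<Rightarrow>'a::comm_semiring_1^'n^'n) S) = (\<Sum>x\<in>S. trace (f x))"
  by (induction S rule: finite_induct) (auto simp: trace_add trace_0[simplified])

lemma cadj_mult: "cadj ((A::complex^'n^'m) ** B) = cadj B ** cadj A"
  by (simp add: cadj_def matrix_matrix_mult_def vec_eq_iff mult.commute)

lemma cadj_cadj[simp]: "cadj (cadj A) = A"
  by (simp add: cadj_def vec_eq_iff)

lemma cadj_sum: "finite S \<Longrightarrow> cadj (sum f S) = (\<Sum>x\<in>S. cadj (f x))"
  by (simp add: cadj_def vec_eq_iff sum_mat_comp)

lemma cadj_diag: "cadj (diag_m d) = diag_m (\<lambda>i. cnj (d i))"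
  by (simp add: cadj_def diag_m_def vec_eq_iff)

lemma diag_mult: "diag_m d ** diag_m e = diag_m (\<lambda>i. d i * e i)"
proof -
  have *: "(\<Sum>k\<in>UNIV. (if i = k then d i else 0) * (if k = j then e k else 0)) = (if i = j then d i * e i else 0)"
    for i j :: 'a
  proof -
    have "(\<lambda>k. (if i = k then d i else 0) * (if k = j then e k else 0)) = (\<lambda>k. if k = i then d i * (if i = j then e i else 0) else 0)"
      by (auto simp: fun_eq_iff)
    then show ?thesis by (simp only:) simp
  qed
  show ?thesis
    unfolding diag_m_def matrix_matrix_mult_def vec_eq_iff by (simp add: *)
qed

lemma cadj_eproj: "cadj (eproj U i) = eproj U i"
  by (simp add: eproj_def cadj_mult cadj_diag matrix_mul_assoc if_distrib cong: if_cong)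

lemma eproj_mult:
  assumes "unitary_mat U"
  shows "eproj U i ** eproj U j = (if i = j then eproj U i else 0)"
proof -
  have "eproj U i ** eproj U j = U ** (diag_m (\<lambda>k. if k = i then 1 else 0) ** (cadj U ** U)
        ** diag_m (\<lambda>k. if k = j then 1 else 0)) ** cadj U"
    by (simp add: eproj_def matrix_mul_assoc)
  also have "\<dots> = U ** diag_m (\<lambda>k. if k = i \<and> k = j then 1 else 0) ** cadj U"
  proof -
    have u: "cadj U ** U = mat 1" using assms unfolding unitary_mat_def by auto
    have d: "(\<lambda>k. (if k = i then 1 else 0) * (if k = j then 1 else (0::complex))) = (\<lambda>k. if k = i \<and> k = j then 1 else 0)"
      by auto
    show ?thesis by (simp only: u matrix_mul_rid diag_mult d)
  qed
  also have "\<dots> = (if i = j then eproj U i else 0)"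
  proof (cases "i = j")
    case True
    then show ?thesis by (simp add: eproj_def)
  next
    case False
    have z: "diag_m (\<lambda>k. if k = i \<and> k = j then 1 else 0) = (0::complex^'a^'a)"
      using False by (simp add: diag_m_def vec_eq_iff)
    show ?thesis using False by (simp only: z times0_right times0_left if_False)
  qed
  finally show ?thesis .
qed

lemma scaleR_mm_left: "((r::real) *\<^sub>R (A::complex^'n^'m)) ** B = r *\<^sub>R (A ** B)"
  by (simp add: matrix_matrix_mult_def vec_eq_iff scaleR_sum_right)

lemma scaleR_mm_right: "(A::complex^'n^'m) ** ((r::real) *\<^sub>R B) = r *\<^sub>R (A ** B)"
  by (simp add: matrix_matrix_mult_def vec_eq_iff scaleR_sum_right)

lemma trace_scaleR: "trace ((r::real) *\<^sub>R (A::complex^'n^'n)) = of_real r * trace A"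
  by (simp add: trace_def sum_distrib_left scaleR_conv_of_real[where 'a=complex])

lemma trace_diag_mult: "trace (diag_m d ** M) = (\<Sum>k\<in>UNIV. d k * M $ k $ k)"
  by (simp add: trace_def diag_m_def matrix_matrix_mult_def if_distrib if_distribR sum.delta cong: if_cong)



lemma W_op_app:
  assumes "unitary_mat U"
  shows "W_op T2 U b F p = (\<Sum>i\<in>UNIV. eproj U i ** F (fst p - b i, snd p - b i / T2))"
proof -
  obtain p1 p2 where p: "p = (p1, p2)" by fastforce
  have "W_op T2 U b F p = (\<Sum>j\<in>UNIV. \<Sum>i\<in>UNIV. eproj U j ** eproj U i ** F (p1 - b i, p2 - b j / T2))"
    by (simp add: p W_op_def ctrl_exp1_def ctrl_exp2_def mm_sum_right matrix_mul_assoc)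
  also have "\<dots> = (\<Sum>j\<in>UNIV. eproj U j ** F (p1 - b j, p2 - b j / T2))"
    by (simp add: eproj_mult[OF assms] if_distrib if_distribR sum.delta cong: if_cong)
  finally show ?thesis by (simp add: p)
qed

lemma trace_sandwich:
  assumes "unitary_mat U"
  shows "trace (sandwich (W_op T2 U b) K p p)
       = (\<Sum>i\<in>UNIV. trace (eproj U i ** K (fst p - b i, snd p - b i / T2) (fst p - b i, snd p - b i / T2)))"
proof -
  define s where "s i = (fst p - b i, snd p - b i / T2)" for i
  have "sandwich (W_op T2 U b) K p p = cadj (\<Sum>j\<in>UNIV. eproj U j ** cadj (\<Sum>i\<in>UNIV. eproj U i ** K (s i) (s j)))"
    by (simp add: sandwich_def ker_adj_def op_left_def W_op_app[OF assms] s_def)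
  also have "\<dots> = (\<Sum>j\<in>UNIV. \<Sum>i\<in>UNIV. eproj U i ** K (s i) (s j) ** eproj U j)"
    by (simp add: cadj_sum cadj_mult cadj_eproj mm_sum_left)
  finally have "trace (sandwich (W_op T2 U b) K p p) = (\<Sum>j\<in>UNIV. \<Sum>i\<in>UNIV. trace (eproj U i ** K (s i) (s j) ** eproj U j))"
    by (simp add: trace_sum)
  also have "\<dots> = (\<Sum>j\<in>UNIV. \<Sum>i\<in>UNIV. trace (eproj U j ** eproj U i ** K (s i) (s j)))"
    by (simp add: trace_mul_sym[of _ "eproj U _"] matrix_mul_assoc)
  also have "\<dots> = (\<Sum>j\<in>UNIV. trace (eproj U j ** K (s j) (s j)))"
    by (simp add: eproj_mult[OF assms] if_distrib if_distribR sum.delta trace_0[simplified] cong: if_cong)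
  finally show ?thesis by (simp add: s_def)
qed


lemma logistic_nonneg_aux: "T1 > 0 \<Longrightarrow> 0 \<le> logistic T1 p"
  by (simp add: logistic_def)
lemma trace_spec:
  assumes U: "unitary_mat U"
  shows "trace (spec_fun f U b ** \<rho>) = (\<Sum>k\<in>UNIV. complex_of_real (f (b k)) * (cadj U ** \<rho> ** U) $ k $ k)"
    and "trace (eproj U i ** \<rho>) = (cadj U ** \<rho> ** U) $ i $ i"
proof -
  have "trace (spec_fun f U b ** \<rho>) = trace (diag_m (\<lambda>i. complex_of_real (f (b i))) ** (cadj U ** \<rho> ** U))"
    unfolding spec_fun_def
    by (metis matrix_mul_assoc trace_mul_sym)
  then show "trace (spec_fun f U b ** \<rho>) = (\<Sum>k\<in>UNIV. complex_of_real (f (b k)) * (cadj U ** \<rho> ** U) $ k $ k)"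
    by (simp add: trace_diag_mult)
  have "trace (eproj U i ** \<rho>) = trace (diag_m (\<lambda>j. if j = i then 1 else 0) ** (cadj U ** \<rho> ** U))"
    unfolding eproj_def
    by (metis matrix_mul_assoc trace_mul_sym)
  then show "trace (eproj U i ** \<rho>) = (cadj U ** \<rho> ** U) $ i $ i"
    by (simp add: trace_diag_mult if_distrib if_distribR sum.delta cong: if_cong)
qed

lemma jd_eq:
  assumes T1: "T1 > 0" and U: "unitary_mat U"
  shows "joint_density T1 T2 U b \<rho> (p1, p2) =
    (\<Sum>i\<in>UNIV. complex_of_real (exp (- ((p1 - b i)\<^sup>2)) / sqrt pi * logistic T1 (p2 - b i / T2)) * trace (eproj U i ** \<rho>))"
proof -
  have v: "vac_wf x * vac_wf x = exp (- (x\<^sup>2)) / sqrt pi" for x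
    unfolding vac_wf_def by simp
  have l: "logistic_wf T1 y * logistic_wf T1 y = logistic T1 y" for y
    unfolding logistic_wf_def using logistic_nonneg_aux[OF T1, of y] by simp
  have e: "vac_wf x * logistic_wf T1 y * vac_wf x * logistic_wf T1 y = exp (- (x\<^sup>2)) / sqrt pi * logistic T1 y" for x y
  proof -
    have "vac_wf x * logistic_wf T1 y * vac_wf x * logistic_wf T1 y = (vac_wf x * vac_wf x) * (logistic_wf T1 y * logistic_wf T1 y)"
      by (simp only: ac_simps)
    then show ?thesis by (simp only: v l)
  qed
  have "joint_density T1 T2 U b \<rho> (p1, p2) = (\<Sum>i\<in>UNIV. trace (eproj U i ** 
     ((vac_wf (p1 - b i) * logistic_wf T1 (p2 - b i / T2) * vac_wf (p1 - b i) * logistic_wf T1 (p2 - b i / T2)) *\<^sub>R \<rho>)))"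
    unfolding joint_density_def trace_sandwich[OF U] by (simp add: init_state_def)
  also have "\<dots> = (\<Sum>i\<in>UNIV. complex_of_real (exp (- ((p1 - b i)\<^sup>2)) / sqrt pi * logistic T1 (p2 - b i / T2)) * trace (eproj U i ** \<rho>))"
    by (simp only: scaleR_mm_right trace_scaleR e)
  finally show ?thesis .
qed


lemma prod_integral:
  fixes f g :: "real \<Rightarrow> real"
  assumes f: "integrable lborel f" and g: "integrable lborel g"
  shows "integrable (lborel :: (real \<times> real) measure) (\<lambda>(x,y). f x * g y)"
    and "(\<integral>z. (case z of (x,y) \<Rightarrow> f x * g y) \<partial>(lborel :: (real \<times> real) measure)) = integral\<^sup>L lborel f * integral\<^sup>L lborel g"
proof -
  have ps: "pair_sigma_finite (lborel::real measure) (lborel::real measure)" ..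
  have fm[measurable]: "f \<in> borel_measurable borel" using f by auto
  have gm[measurable]: "g \<in> borel_measurable borel" using g by auto
  have I: "integrable (lborel \<Otimes>\<^sub>M lborel) (\<lambda>(x,y). f x * g y)"
  proof (rule pair_sigma_finite.Fubini_integrable[OF ps])
    show "(\<lambda>(x,y). f x * g y) \<in> borel_measurable (lborel \<Otimes>\<^sub>M lborel)" by measurable
    have "(\<lambda>x. \<integral>y. norm (case (x, y) of (x, y) \<Rightarrow> f x * g y) \<partial>lborel) = (\<lambda>x. norm (f x) * (\<integral>y. norm (g y) \<partial>lborel))"
      by (simp add: abs_mult)
    then show "integrable lborel (\<lambda>x. \<integral>y. norm (case (x, y) of (x, y) \<Rightarrow> f x * g y) \<partial>lborel)"
      using f by (simp add: integrable_norm)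
    show "AE x in lborel. integrable lborel (\<lambda>y. case (x, y) of (x, y) \<Rightarrow> f x * g y)"
      using g by simp
  qed
  then show "integrable (lborel :: (real \<times> real) measure) (\<lambda>(x,y). f x * g y)"
    by (simp add: lborel_prod)
  have "(\<integral>z. (case z of (x,y) \<Rightarrow> f x * g y) \<partial>(lborel \<Otimes>\<^sub>M lborel)) = (\<integral>x. (\<integral>y. f x * g y \<partial>lborel) \<partial>lborel)"
    using pair_sigma_finite.integral_fst[OF ps, of "\<lambda>x y. f x * g y"] I by simp
  also have "\<dots> = integral\<^sup>L lborel f * integral\<^sup>L lborel g"
    by simp
  finally show "(\<integral>z. (case z of (x,y) \<Rightarrow> f x * g y) \<partial>(lborel :: (real \<times> real) measure)) = integral\<^sup>L lborel f * integral\<^sup>L lborel g"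
    by (simp add: lborel_prod)
qed

lemma gauss_eq: "exp (- ((x - b)\<^sup>2)) / sqrt pi = normal_density b (1 / sqrt 2) x"
  by (simp add: normal_density_def power_divide)

lemma gauss_moment:
  "integrable lborel (\<lambda>x. x * (exp (- ((x - b)\<^sup>2)) / sqrt pi))"
  "(\<integral>x. x * (exp (- ((x - b)\<^sup>2)) / sqrt pi) \<partial>lborel) = b"
  using integrable_normal_moment_nz_1[of "1 / sqrt 2" b] integral_normal_moment_nz_1[of "1 / sqrt 2" b]
  by (simp_all add: gauss_eq mult.commute)

lemma logistic_nonneg: "T1 > 0 \<Longrightarrow> 0 \<le> logistic T1 p"
  by (simp add: logistic_def)

lemma logistic_deriv:
  assumes "T1 > 0"
  shows "((\<lambda>x. exp ((x - c) / T1) / (exp ((x - c) / T1) + 1)) has_real_derivative logistic T1 (x - c)) (at x)"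
proof -
  have ne: "exp ((x - c) / T1) + 1 \<noteq> 0" by (metis add_pos_pos exp_gt_zero less_irrefl zero_less_one)
  show ?thesis
    using assms ne by (auto intro!: derivative_eq_intros simp: logistic_def field_simps power2_eq_square)
qed

lemma logistic_tail:
  assumes T1: "T1 > 0"
  shows "has_bochner_integral lborel (\<lambda>x. indicator {0..} x * logistic T1 (x - c)) (1 / (1 + exp (- c / T1)))"
proof -
  define F where "F x = exp ((x - c) / T1) / (exp ((x - c) / T1) + 1)" for x
  have lim: "(F \<longlongrightarrow> 1) at_top"
  proof -
    have ne: "1 + exp (y::real) \<noteq> 0" for y using exp_gt_zero[of y] by linarith
    have "F = (\<lambda>x. 1 - 1 / (exp ((x - c) / T1) + 1))"
      by (rule ext) (simp add: F_def field_simps ne)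
    moreover have "((\<lambda>x. 1 - 1 / (exp ((x - c) / T1) + 1)) \<longlongrightarrow> 1 - 0) at_top"
    proof (intro tendsto_intros)
      have "filterlim (\<lambda>x::real. (- c) + x) at_top at_top"
        by (rule filterlim_tendsto_add_at_top[OF tendsto_const filterlim_ident])
      then have "filterlim (\<lambda>x::real. (1 / T1) * ((- c) + x)) at_top at_top"
        using T1 by (intro filterlim_tendsto_pos_mult_at_top[OF tendsto_const]) auto
      then have lin: "filterlim (\<lambda>x. (x - c) / T1) at_top at_top" by (simp add: field_simps)
      have "filterlim (\<lambda>x. exp ((x - c) / T1) + 1) at_top at_top"
      proof (rule filterlim_at_top_mono)
        show "filterlim (\<lambda>x. exp ((x - c) / T1)) at_top at_top"
          by (rule filterlim_compose[OF exp_at_top lin])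
      qed auto
      then show "((\<lambda>x. 1 / (exp ((x - c) / T1) + 1)) \<longlongrightarrow> 0) at_top"
        by (intro tendsto_divide_0[OF tendsto_const] filterlim_at_top_imp_at_infinity)
    qed
    ultimately show ?thesis by simp
  qed
  have meas[measurable]: "(\<lambda>x. logistic T1 (x - c)) \<in> borel_measurable borel"
    unfolding logistic_def by measurable
  have nn: "(\<integral>\<^sup>+x. ennreal (logistic T1 (x - c)) * indicator {0 ..} x \<partial>lborel) = 1 - F 0"
  proof (rule nn_integral_FTC_atLeast[OF meas _ _ lim])
    show "DERIV F x :> logistic T1 (x - c)" for x
      unfolding F_def[abs_def] by (rule logistic_deriv[OF T1])
    show "0 \<le> logistic T1 (x - c)" for x by (rule logistic_nonneg[OF T1])
  qed
  have F0: "1 - F 0 = 1 / (1 + exp (- c / T1))"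
  proof -
    have a: "(0 - c) / T1 = - c / T1" by simp
    have p: "exp (- c / T1) + 1 \<noteq> 0" "1 + exp (- c / T1) \<noteq> 0"
      using exp_gt_zero[of "- c / T1"] by linarith+
    show ?thesis unfolding F_def a using p by (simp add: field_simps)
  qed
  have nn2: "(\<integral>\<^sup>+x. ennreal (indicator {0..} x * logistic T1 (x - c)) \<partial>lborel) = ennreal (1 / (1 + exp (- c / T1)))"
    using nn F0 by (simp add: indicator_mult_ennreal mult.commute)
  have ge: "\<And>x. 0 \<le> indicator {0..} x * logistic T1 (x - c)"
    using logistic_nonneg[OF T1] by simp
  have int: "integrable lborel (\<lambda>x. indicator {0..} x * logistic T1 (x - c))"
    by (rule integrableI_nonneg) (use nn2 ge in auto)
  have "integral\<^sup>L lborel (\<lambda>x. indicator {0..} x * logistic T1 (x - c)) = 1 / (1 + exp (- c / T1))"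
    by (subst integral_eq_nn_integral) (use nn2 ge in \<open>auto intro: add_pos_pos\<close>)
  with int show ?thesis by (simp add: has_bochner_integral_iff)
qed



theorem theorem10:
  fixes T1 T2 :: real and H \<rho> U :: "complex^'n^'n" and b :: "'n \<Rightarrow> real"
  assumes "T1 > 0" and "T2 > 0"
    and "hermitian_mat H" and "unitary_mat U"
    and "H = U ** diag_m (\<lambda>i. complex_of_real (b i)) ** cadj U"
    and "density_op \<rho>"
  shows "integrable lborel
           (\<lambda>(p1, p2). complex_of_real (p1 * indicator {0..} p2) * joint_density T1 T2 U b \<rho> (p1, p2))
       \<and> (\<integral>pp. (case pp of (p1, p2) \<Rightarrow>
              complex_of_real (p1 * indicator {0..} p2) * joint_density T1 T2 U b \<rho> (p1, p2)) \<partial>lborel)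
         = trace (spec_fun (silu (T1 * T2)) U b ** \<rho>)"
proof -
  note T1 = \<open>T1 > 0\<close> and T2 = \<open>T2 > 0\<close> and U = \<open>unitary_mat U\<close>
  define c where "c i = trace (eproj U i ** \<rho>)" for i
  define G where "G i x = x * (exp (- ((x - b i)\<^sup>2)) / sqrt pi)" for i x
  define K where "K i y = indicator {0..} y * logistic T1 (y - b i / T2)" for i y
  have Gi: "integrable lborel (G i)" and Gv: "integral\<^sup>L lborel (G i) = b i" for i
  proof -
    have "G i = (\<lambda>x. x * (exp (- ((x - b i)\<^sup>2)) / sqrt pi))" by (simp add: G_def fun_eq_iff)
    then show "integrable lborel (G i)" "integral\<^sup>L lborel (G i) = b i"
      using gauss_moment[of "b i"] by simp_all
  qed
  have Ki: "integrable lborel (K i)" and Kv: "integral\<^sup>L lborel (K i) = 1 / (1 + exp (- (b i / T2) / T1))" for i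
  proof -
    have "K i = (\<lambda>y. indicator {0..} y * logistic T1 (y - b i / T2))" by (simp add: K_def fun_eq_iff)
    then show "integrable lborel (K i)" "integral\<^sup>L lborel (K i) = 1 / (1 + exp (- (b i / T2) / T1))"
      using logistic_tail[OF T1, of "b i / T2"] unfolding has_bochner_integral_iff by simp_all
  qed
  have pt: "(case pp of (p1, p2) \<Rightarrow> complex_of_real (p1 * indicator {0..} p2) * joint_density T1 T2 U b \<rho> (p1, p2))
      = (\<Sum>i\<in>UNIV. c i * complex_of_real (case pp of (x, y) \<Rightarrow> G i x * K i y))" for pp
  proof (cases pp)
    case (Pair p1 p2)
    show ?thesis
      unfolding Pair jd_eq[OF T1 U] prod.case sum_distrib_left
    proof (rule sum.cong[OF refl])
      fix i
      show "complex_of_real (p1 * indicator {0..} p2) * (complex_of_real (exp (- ((p1 - b i)\<^sup>2)) / sqrt pi * logistic T1 (p2 - b i / T2)) * trace (eproj U i ** \<rho>))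
          = c i * complex_of_real (G i p1 * K i p2)"
        unfolding c_def G_def K_def of_real_mult by (simp only: ac_simps)
    qed
  qed
  have fun_eq: "(\<lambda>(p1, p2). complex_of_real (p1 * indicator {0..} p2) * joint_density T1 T2 U b \<rho> (p1, p2))
      = (\<lambda>pp. \<Sum>i\<in>UNIV. c i * complex_of_real (case pp of (x, y) \<Rightarrow> G i x * K i y))"
    by (rule ext, rule pt)
  have PI: "integrable (lborel :: (real \<times> real) measure) (\<lambda>pp. case pp of (x, y) \<Rightarrow> G i x * K i y)" for i
    by (rule prod_integral(1)[OF Gi Ki])
  have PV: "(\<integral>pp. (case pp of (x, y) \<Rightarrow> G i x * K i y) \<partial>(lborel :: (real \<times> real) measure)) = b i * (1 / (1 + exp (- (b i / T2) / T1)))" for i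
    using prod_integral(2)[OF Gi Ki] unfolding Gv Kv .
  have int: "integrable lborel (\<lambda>pp::real\<times>real. \<Sum>i\<in>UNIV. c i * complex_of_real (case pp of (x, y) \<Rightarrow> G i x * K i y))"
  proof (rule Bochner_Integration.integrable_sum)
    fix i
    show "integrable lborel (\<lambda>pp::real\<times>real. c i * complex_of_real (case pp of (x, y) \<Rightarrow> G i x * K i y))"
      by (rule integrable_mult_right, rule integrable_of_real[OF PI[of i]])
  qed
  have "(\<integral>pp. (\<Sum>i\<in>UNIV. c i * complex_of_real (case pp of (x, y) \<Rightarrow> G i x * K i y)) \<partial>lborel)
      = (\<Sum>i\<in>UNIV. c i * complex_of_real (b i * (1 / (1 + exp (- (b i / T2) / T1)))))"
  proof (subst Bochner_Integration.integral_sum)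
    fix i
    show "integrable lborel (\<lambda>pp::real\<times>real. c i * complex_of_real (case pp of (x, y) \<Rightarrow> G i x * K i y))"
      by (rule integrable_mult_right, rule integrable_of_real[OF PI[of i]])
  next
    show "(\<Sum>i\<in>UNIV. \<integral>pp. c i * complex_of_real (case pp of (x, y) \<Rightarrow> G i x * K i y) \<partial>lborel)
        = (\<Sum>i\<in>UNIV. c i * complex_of_real (b i * (1 / (1 + exp (- (b i / T2) / T1)))))"
    proof (rule sum.cong[OF refl])
      fix i
      show "(\<integral>pp. c i * complex_of_real (case pp of (x, y) \<Rightarrow> G i x * K i y) \<partial>lborel)
        = c i * complex_of_real (b i * (1 / (1 + exp (- (b i / T2) / T1))))"
        by (simp only: integral_mult_right_zero integral_complex_of_real PV)
    qed
  qed
  also have "\<dots> = trace (spec_fun (silu (T1 * T2)) U b ** \<rho>)"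
  proof -
    have si: "b i * (1 / (1 + exp (- (b i / T2) / T1))) = silu (T1 * T2) (b i)" for i
    proof -
      have e: "- (b i / T2) / T1 = - b i / (T1 * T2)"
        by (simp add: divide_divide_eq_left mult.commute)
      show ?thesis unfolding silu_def e by simp
    qed
    show ?thesis
      unfolding trace_spec(1)[OF U] c_def trace_spec(2)[OF U]
      by (rule sum.cong[OF refl]) (simp only: si mult.commute)
  qed
  finally have eq: "(\<integral>pp. (\<Sum>i\<in>UNIV. c i * complex_of_real (case pp of (x, y) \<Rightarrow> G i x * K i y)) \<partial>lborel)
      = trace (spec_fun (silu (T1 * T2)) U b ** \<rho>)" .
  show ?thesis
    unfolding fun_eq by (intro conjI int eq)
qed

end
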